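(* Let $(g_t^* )_{t\in[0,1]}$ be a family of Lebesgue probability densities $g_t^*$ on $\mathbb{R}$ such that for every $s\in\mathbb{R}$ the function $t\mapsto g_t^*(s)$ is continuous on $[0,1]$ and $\int_{\mathbb{R}} \sup_{t\in[0,1]} g_t^*(s)\,ds<\infty$. Define \[ \|f\|_{g^*} := \int_{\mathbb{R}} \sup_{t\in[0,1]}\big(|f(t)|\,g_t^*(s)\big)\,ds, \qquad f\in E[0,1]. \] Then $\|\cdot\|_{g^*}$ is a $D$-norm; more precisely, for every real-valued random variable $X$ with Lebesgue density $h>0$, the process $\mathbf{Z}=(Z_t)_{t\in[0,1]}$ with $Z_t:=g_t^*(X)/h(X)$ is a generator and $\|f\|_{g^*}=E\big(\sup_{t\in[0,1]}|f(t)Z_t|\big)$ for all $f\in E[0,1]$.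
   Context: $E[0,1]$ denotes the set of all bounded real-valued functions on $[0,1]$ that have only finitely many discontinuities. $\bar C^+[0,1]$ denotes the set of non-negative continuous functions on $[0,1]$. A generator is a stochastic process $\mathbf{Z}=(Z_t)_{t\in[0,1]}$ with sample paths in $\bar C^+[0,1]$ such that $E(Z_t)=1$ for every $t\in[0,1]$ and $E(\sup_{t\in[0,1]}Z_t)<\infty$. A $D$-norm is a function on $E[0,1]$ of the form $\|f\|_D=E\big(\sup_{t\in[0,1]}|f(t)Z_t|\big)$, $f\in E[0,1]$, for some generator $\mathbf{Z}$; $\mathbf{Z}$ is then said to generate this $D$-norm. *)

theory Defs
  imports "HOL-Probability.Probability"
begin

text \<open>E[0,1]: bounded real functions on [0,1] with only finitely many discontinuities
  (continuity taken relative to [0,1]; values outside [0,1] are irrelevant).\<close>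
definition E01 :: "(real \<Rightarrow> real) set" where
  "E01 = {f. bounded (f ` {0..1}) \<and>
             finite {t \<in> {0..1}. \<not> continuous (at t within {0..1}) f}}"

definition generator :: "'a measure \<Rightarrow> (real \<Rightarrow> 'a \<Rightarrow> real) \<Rightarrow> bool" where
  "generator M Z \<longleftrightarrow>
     prob_space M \<and>
     (\<forall>t\<in>{0..1}. Z t \<in> borel_measurable M) \<and>
     (\<forall>\<omega>\<in>space M. continuous_on {0..1} (\<lambda>t. Z t \<omega>) \<and> (\<forall>t\<in>{0..1}. 0 \<le> Z t \<omega>)) \<and>
     (\<forall>t\<in>{0..1}. integrable M (Z t) \<and> integral\<^sup>L M (Z t) = 1) \<and>
     integrable M (\<lambda>\<omega>. SUP t\<in>{0..1}. Z t \<omega>)"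

definition Dnorm :: "'a measure \<Rightarrow> (real \<Rightarrow> 'a \<Rightarrow> real) \<Rightarrow> (real \<Rightarrow> real) \<Rightarrow> real" where
  "Dnorm M Z f = integral\<^sup>L M (\<lambda>\<omega>. SUP t\<in>{0..1}. \<bar>f t * Z t \<omega>\<bar>)"

definition gnorm :: "(real \<Rightarrow> real \<Rightarrow> real) \<Rightarrow> (real \<Rightarrow> real) \<Rightarrow> real" where
  "gnorm g f = integral\<^sup>L lborel (\<lambda>s. SUP t\<in>{0..1}. \<bar>f t\<bar> * g t s)"

end

theory Submission
  imports Defs
begin

lemma cSUP_div_const:
  fixes \<phi> :: "real \<Rightarrow> real"
  assumes "S \<noteq> {}" "bdd_above (\<phi> ` S)" "c > 0"
  shows "(SUP t\<in>S. \<phi> t / c) = (SUP t\<in>S. \<phi> t) / c"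
proof -
  have b2: "bdd_above ((\<lambda>t. \<phi> t / c) ` S)"
  proof -
    from assms(2) obtain B where "\<And>t. t\<in>S \<Longrightarrow> \<phi> t \<le> B" by (auto simp: bdd_above_def)
    then show ?thesis using assms(3) by (intro bdd_aboveI2[where M="B/c"]) (simp add: divide_right_mono)
  qed
  show ?thesis
  proof (rule antisym)
    show "(SUP t\<in>S. \<phi> t / c) \<le> (SUP t\<in>S. \<phi> t) / c"
      using assms by (intro cSUP_least) (auto intro!: divide_right_mono cSUP_upper)
  next
    have "(SUP t\<in>S. \<phi> t) \<le> c * (SUP t\<in>S. \<phi> t / c)"
    proof (rule cSUP_least[OF assms(1)])
      fix t assume "t \<in> S"
      then have "\<phi> t / c \<le> (SUP t\<in>S. \<phi> t / c)" using b2 by (intro cSUP_upper)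
      then show "\<phi> t \<le> c * (SUP t\<in>S. \<phi> t / c)" using assms(3)
        by (simp add: field_simps)
    qed
    then show "(SUP t\<in>S. \<phi> t) / c \<le> (SUP t\<in>S. \<phi> t / c)" using assms(3)
      by (simp add: field_simps)
  qed
qed

lemma islimpt_rat01:
  assumes "t \<in> {0..1::real}"
  shows "t islimpt (\<rat> \<inter> {0..1})"
proof (unfold islimpt_approachable, intro allI impI)
  fix e :: real assume e: "e > 0"
  show "\<exists>x'\<in>\<rat> \<inter> {0..1}. x' \<noteq> t \<and> dist x' t < e"
  proof (cases "t < 1")
    case True
    then obtain r where "r \<in> \<rat>" "t < r" "r < min (t+e) 1" using Rats_dense_in_real[of t "min (t+e) 1"] e by auto
    then show ?thesis using assms by (intro bexI[of _ r]) (auto simp: dist_real_def)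
  next
    case False
    then obtain r where "r \<in> \<rat>" "max (t-e) 0 < r" "r < t" using Rats_dense_in_real[of "max (t-e) 0" t] e assms by auto
    then show ?thesis using assms by (intro bexI[of _ r]) (auto simp: dist_real_def)
  qed
qed

lemma bdd_phi:
  fixes g :: "real \<Rightarrow> real \<Rightarrow> real" and f :: "real \<Rightarrow> real"
  assumes g_cont: "continuous_on {0..1} (\<lambda>t. g t s)"
    and fb: "bounded (f ` {0..1})"
  shows "bdd_above ((\<lambda>t. \<bar>f t\<bar> * g t s) ` {0..1})"
proof -
  have "compact ((\<lambda>t. g t s) ` {0..1})" by (rule compact_continuous_image[OF g_cont]) auto
  then obtain K where K: "\<And>t. t \<in> {0..1} \<Longrightarrow> \<bar>g t s\<bar> \<le> K"
    using compact_imp_bounded bounded_real by (metis image_eqI)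
  obtain B where B: "\<And>t. t \<in> {0..1} \<Longrightarrow> \<bar>f t\<bar> \<le> B"
    using fb bounded_real by (metis image_eqI)
  show ?thesis
  proof (rule bdd_aboveI2[where M="B*K"])
    fix t assume t: "t \<in> {0..1::real}"
    have "\<bar>f t\<bar> * g t s \<le> \<bar>f t\<bar> * \<bar>g t s\<bar>" by (simp add: mult_left_mono)
    also have "\<dots> \<le> B * K" using B[OF t] K[OF t] by (intro mult_mono) auto
    finally show "\<bar>f t\<bar> * g t s \<le> B * K" .
  qed
qed

lemma sup_measurable:
  fixes g :: "real \<Rightarrow> real \<Rightarrow> real" and f :: "real \<Rightarrow> real"
  assumes g_meas: "\<And>t. t \<in> {0..1} \<Longrightarrow> g t \<in> borel_measurable lborel"
    and g_cont: "\<And>s. continuous_on {0..1} (\<lambda>t. g t s)"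
    and fb: "bounded (f ` {0..1})"
    and fin: "finite {t \<in> {0..1}. \<not> continuous (at t within {0..1}) f}"
  shows "(\<lambda>s. SUP t\<in>{0..1}. \<bar>f t\<bar> * g t s) \<in> borel_measurable lborel"
proof -
  define D where "D = {t \<in> {0..1}. \<not> continuous (at t within {0..1}) f}"
  define T where "T = \<rat> \<inter> {0..1::real}"
  define I where "I = T \<union> D"
  have IS: "I \<subseteq> {0..1}" by (auto simp: I_def T_def D_def)
  have Ine: "I \<noteq> {}" by (auto simp: I_def T_def intro!: exI[of _ 0])
  have cI: "countable I" using fin countable_rat unfolding I_def T_def D_def
    by (auto intro: countable_finite)
  have eq: "(SUP t\<in>{0..1}. \<bar>f t\<bar> * g t s) = (SUP t\<in>I. \<bar>f t\<bar> * g t s)" for s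
  proof -
    have bdd: "bdd_above ((\<lambda>t. \<bar>f t\<bar> * g t s) ` {0..1})" by (rule bdd_phi[where g=g and s=s, OF g_cont[of s] fb])
    have bddI: "bdd_above ((\<lambda>t. \<bar>f t\<bar> * g t s) ` I)" using bdd by (rule bdd_above_mono) (use IS in auto)
    show ?thesis
    proof (rule antisym)
      show "(SUP t\<in>{0..1}. \<bar>f t\<bar> * g t s) \<le> (SUP t\<in>I. \<bar>f t\<bar> * g t s)"
      proof (rule cSUP_least)
        show "{0..1::real} \<noteq> {}" by simp
      next
        fix t :: real assume t: "t \<in> {0..1}"
        show "\<bar>f t\<bar> * g t s \<le> (SUP t\<in>I. \<bar>f t\<bar> * g t s)"
        proof (cases "t \<in> D")
          case True then show ?thesis using bddI by (intro cSUP_upper) (auto simp: I_def)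
        next
          case False
          then have fc: "continuous (at t within {0..1}) f" using t by (auto simp: D_def)
          have gc: "continuous (at t within {0..1}) (\<lambda>t. g t s)"
            using g_cont[of s] t by (simp add: continuous_on_eq_continuous_within)
          have "((\<lambda>t. \<bar>f t\<bar> * g t s) \<longlongrightarrow> \<bar>f t\<bar> * g t s) (at t within {0..1})"
            using continuous_mult[OF continuous_rabs[OF fc] gc] by (simp add: continuous_within)
          then have lim: "((\<lambda>t. \<bar>f t\<bar> * g t s) \<longlongrightarrow> \<bar>f t\<bar> * g t s) (at t within T)"
            by (rule tendsto_within_subset) (auto simp: T_def)
          have nt: "at t within T \<noteq> bot" using islimpt_rat01[OF t]
            by (simp add: T_def trivial_limit_within)
          show ?thesis
          proof (rule tendsto_upperbound[OF lim _ nt])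
            show "\<forall>\<^sub>F x in at t within T. \<bar>f x\<bar> * g x s \<le> (SUP t\<in>I. \<bar>f t\<bar> * g t s)"
              using bddI unfolding eventually_at_filter by (intro always_eventually) (auto simp: I_def intro!: cSUP_upper)
          qed
        qed
      qed
    next
      show "(SUP t\<in>I. \<bar>f t\<bar> * g t s) \<le> (SUP t\<in>{0..1}. \<bar>f t\<bar> * g t s)"
        using IS Ine bdd by (intro cSUP_subset_mono) auto
    qed
  qed
  have "(\<lambda>s. SUP t\<in>I. \<bar>f t\<bar> * g t s) \<in> borel_measurable lborel"
  proof (rule borel_measurable_cSUP[OF cI])
    fix i assume "i \<in> I"
    then show "(\<lambda>s. \<bar>f i\<bar> * g i s) \<in> borel_measurable lborel" using IS g_meas by auto
  next
    fix s show "bdd_above ((\<lambda>i. \<bar>f i\<bar> * g i s) ` I)"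
      using bdd_phi[where g=g and s=s, OF g_cont[of s] fb] by (rule bdd_above_mono) (use IS in auto)
  qed
  then show ?thesis by (simp add: eq)
qed

theorem proposition2p2:
  fixes g :: "real \<Rightarrow> real \<Rightarrow> real"
    and M :: "'a measure" and X :: "'a \<Rightarrow> real" and h :: "real \<Rightarrow> real"
  assumes g_meas: "\<And>t. t \<in> {0..1} \<Longrightarrow> g t \<in> borel_measurable lborel"
    and g_nonneg: "\<And>t s. t \<in> {0..1} \<Longrightarrow> 0 \<le> g t s"
    and g_prob: "\<And>t. t \<in> {0..1} \<Longrightarrow> (\<integral>\<^sup>+ s. ennreal (g t s) \<partial>lborel) = 1"
    and g_cont: "\<And>s. continuous_on {0..1} (\<lambda>t. g t s)"
    and g_sup: "(\<integral>\<^sup>+ s. ennreal (SUP t\<in>{0..1}. g t s) \<partial>lborel) < \<infinity>"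
    and M: "prob_space M"
    and X: "distributed M lborel X (\<lambda>x. ennreal (h x))"
    and h_pos: "\<And>x. 0 < h x"
  shows "generator M (\<lambda>t \<omega>. g t (X \<omega>) / h (X \<omega>)) \<and>
         (\<forall>f\<in>E01. gnorm g f = Dnorm M (\<lambda>t \<omega>. g t (X \<omega>) / h (X \<omega>)) f)"
proof -
  have hm[measurable]: "h \<in> borel_measurable lborel"
    using distributed_real_measurable[OF _ X] h_pos by (simp add: less_imp_le)
  have Xm[measurable]: "X \<in> measurable M lborel" using distributed_measurable[OF X] .
  have h0: "\<And>x. 0 \<le> h x" using h_pos by (simp add: less_imp_le)
  have trans: "integral\<^sup>L M (\<lambda>\<omega>. \<phi> (X \<omega>) / h (X \<omega>)) = integral\<^sup>L lborel \<phi>"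
    if "\<phi> \<in> borel_measurable lborel" for \<phi>
  proof -
    have "integral\<^sup>L lborel (\<lambda>x. h x * (\<phi> x / h x)) = integral\<^sup>L M (\<lambda>\<omega>. \<phi> (X \<omega>) / h (X \<omega>))"
      using that by (intro distributed_integral[OF X]) (auto simp: h0)
    moreover have "(\<lambda>x. h x * (\<phi> x / h x)) = \<phi>" using h_pos by (auto intro!: ext simp: less_imp_neq[symmetric])
    ultimately show ?thesis by simp
  qed
  have transi: "integrable M (\<lambda>\<omega>. \<phi> (X \<omega>) / h (X \<omega>)) \<longleftrightarrow> integrable lborel \<phi>"
    if "\<phi> \<in> borel_measurable lborel" for \<phi>
  proof -
    have "integrable lborel (\<lambda>x. h x * (\<phi> x / h x)) \<longleftrightarrow> integrable M (\<lambda>\<omega>. \<phi> (X \<omega>) / h (X \<omega>))"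
      using that by (intro distributed_integrable[OF X]) (auto simp: h0)
    moreover have "(\<lambda>x. h x * (\<phi> x / h x)) = \<phi>" using h_pos by (auto intro!: ext simp: less_imp_neq[symmetric])
    ultimately show ?thesis by simp
  qed
  have SUPeq: "(SUP t\<in>{0..1}. \<bar>f t * (g t x / h x)\<bar>) = (SUP t\<in>{0..1}. \<bar>f t\<bar> * g t x) / h x"
    if fb: "bounded (f ` {0..1})" for f x
  proof -
    have "(SUP t\<in>{0..1}. \<bar>f t * (g t x / h x)\<bar>) = (SUP t\<in>{0..1}. \<bar>f t\<bar> * g t x / h x)"
      using g_nonneg h_pos by (intro SUP_cong) (auto simp: abs_mult less_imp_le)
    also have "\<dots> = (SUP t\<in>{0..1}. \<bar>f t\<bar> * g t x) / h x"
      by (rule cSUP_div_const) (auto intro: bdd_phi[where g=g and s=x, OF g_cont[of x] fb] h_pos)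
    finally show ?thesis .
  qed
  have one_b: "bounded ((\<lambda>_::real. 1::real) ` {0..1})" by (simp add: image_constant_conv)
  have one_fin: "finite {t \<in> {0..1}. \<not> continuous (at t within {0..1}) (\<lambda>_::real. 1::real)}" by simp
  have gs_meas: "(\<lambda>s. SUP t\<in>{0..1}. g t s) \<in> borel_measurable lborel"
    using sup_measurable[OF g_meas g_cont one_b one_fin] by simp
  have gs_nn: "0 \<le> (SUP t\<in>{0..1}. g t s)" for s
  proof -
    have "g 0 s \<le> (SUP t\<in>{0..1}. g t s)"
      using bdd_phi[where g=g and s=s, OF g_cont[of s] one_b] by (intro cSUP_upper) auto
    then show ?thesis using g_nonneg[of 0 s] by simp
  qed
  have gs_int: "integrable lborel (\<lambda>s. SUP t\<in>{0..1}. g t s)"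
    using gs_meas gs_nn g_sup by (intro integrableI_nonneg) auto
  have Zsup: "(\<lambda>\<omega>. SUP t\<in>{0..1}. g t (X \<omega>) / h (X \<omega>)) = (\<lambda>\<omega>. (SUP t\<in>{0..1}. g t (X \<omega>)) / h (X \<omega>))"
  proof
    fix \<omega>
    have "(SUP t\<in>{0..1}. g t (X \<omega>) / h (X \<omega>)) = (SUP t\<in>{0..1}. \<bar>1 * (g t (X \<omega>) / h (X \<omega>))\<bar>)"
      using g_nonneg h_pos by (intro SUP_cong) (auto simp: less_imp_le)
    also have "\<dots> = (SUP t\<in>{0..1}. \<bar>1::real\<bar> * g t (X \<omega>)) / h (X \<omega>)"
      by (rule SUPeq[OF one_b])
    finally show "(SUP t\<in>{0..1}. g t (X \<omega>) / h (X \<omega>)) = (SUP t\<in>{0..1}. g t (X \<omega>)) / h (X \<omega>)" by simp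
  qed
  have gen: "generator M (\<lambda>t \<omega>. g t (X \<omega>) / h (X \<omega>))"
    unfolding generator_def
  proof (intro conjI ballI)
    show "prob_space M" by (rule M)
  next
    fix t :: real assume t: "t \<in> {0..1}"
    note [measurable] = g_meas[OF t]
    show "(\<lambda>\<omega>. g t (X \<omega>) / h (X \<omega>)) \<in> borel_measurable M" by measurable
    have gi: "integrable lborel (g t)"
      using g_prob[OF t] g_nonneg[OF t] by (intro integrableI_nonneg) auto
    then show "integrable M (\<lambda>\<omega>. g t (X \<omega>) / h (X \<omega>))" using transi by simp
    have "ennreal (integral\<^sup>L lborel (g t)) = 1"
      using nn_integral_eq_integral[OF gi] g_nonneg[OF t] g_prob[OF t] by simp
    then have "integral\<^sup>L lborel (g t) = 1" using ennreal_eq_1 integral_nonneg_AE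
      by (metis ennreal_1 ennreal_inj g_nonneg t AE_I2 zero_le_one)
    then show "integral\<^sup>L M (\<lambda>\<omega>. g t (X \<omega>) / h (X \<omega>)) = 1" using trans by simp
  next
    fix \<omega> assume "\<omega> \<in> space M"
    show "continuous_on {0..1} (\<lambda>t. g t (X \<omega>) / h (X \<omega>))"
      using g_cont by (intro continuous_intros) (auto simp: less_imp_neq[symmetric] h_pos)
  next
    fix \<omega> t assume "\<omega> \<in> space M" "t \<in> {0..1::real}"
    then show "0 \<le> g t (X \<omega>) / h (X \<omega>)" using g_nonneg h0 by simp
  next
    show "integrable M (\<lambda>\<omega>. SUP t\<in>{0..1}. g t (X \<omega>) / h (X \<omega>))"
      unfolding Zsup using transi[OF gs_meas] gs_int by simp
  qed
  have "gnorm g f = Dnorm M (\<lambda>t \<omega>. g t (X \<omega>) / h (X \<omega>)) f" if f: "f \<in> E01" for f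
  proof -
    have fb: "bounded (f ` {0..1})" and fin: "finite {t \<in> {0..1}. \<not> continuous (at t within {0..1}) f}"
      using f by (auto simp: E01_def)
    have "Dnorm M (\<lambda>t \<omega>. g t (X \<omega>) / h (X \<omega>)) f
        = integral\<^sup>L M (\<lambda>\<omega>. (SUP t\<in>{0..1}. \<bar>f t\<bar> * g t (X \<omega>)) / h (X \<omega>))"
      unfolding Dnorm_def using SUPeq[OF fb] by simp
    also have "\<dots> = integral\<^sup>L lborel (\<lambda>s. SUP t\<in>{0..1}. \<bar>f t\<bar> * g t s)"
      by (rule trans[OF sup_measurable[OF g_meas g_cont fb fin]])
    finally show ?thesis by (simp add: gnorm_def)
  qed
  with gen show ?thesis by blast
qed

end
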